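(* Let $\mathcal{I}$ be a finite set of closed intervals whose $2|\mathcal{I}|$ start- and endpoints are pairwise distinct, let $k\ge 1$, and let $X$ (the set of intervals of $\mathcal{I}$ together with all virtual elements) and $\mathcal{S}$ be produced by the construction described in the context. If $\chi:X\to\{1,\dots,k\}$ is a coloring such that, for every constraint $S\in\mathcal{S}$, any two distinct elements of $S$ receive distinct colors, then the restriction of $\chi$ to $\mathcal{I}$ is a balanced $k$-coloring of $\mathcal{I}$.
   Context: For a finite set $\mathcal{I}$ of closed intervals, a $k$-coloring is a map $\chi:\mathcal{I}\to\{1,\dots,k\}$; with $c_i(x)$ the number of intervals containing $x$ of color $i$, the coloring is balanced if $\max_{x\in\mathbb{R}}\max_{i,j}|c_i(x)-c_j(x)|\le 1$. Construction. The events are the start- and endpoints of the intervals, scanned in increasing order. We maintain a list of active events (initially empty), a growing ground set $X$ (initially $\mathcal{I}$) and a family $\mathcal{S}$ of constraints (subsets/tuples of $X$, initially empty). Whenever the active list is empty, the type of the next event (start or end) fixes the type of the current phase. Start phase: startpoints are appended to the active list. (a) If the active list contains startpoints of $k$ elements $I_1,\dots,I_k$ (actual intervals or virtual elements), add the constraint $(I_1,\dots,I_k)$ to $\mathcal{S}$ and clear the active list. (b) If the active list contains startpoints of $I_1,\dots,I_j$ with $j<k$ and the next event is the endpoint of some interval $I_{j+1}$, create new virtual elements $x_{j+1},\dots,x_k,y_1,\dots,y_{j-1}$ (added to $X$, not used before), add the two constraints $(I_1,\dots,I_j,x_{j+1},\dots,x_k)$ and $(y_1,\dots,y_{j-1},I_{j+1},x_{j+1},\dots,x_k)$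 to $\mathcal{S}$, and replace the active list by the (virtual) startpoints of $y_1,\dots,y_{j-1}$ (the phase remains a start phase; if $j=1$ the list becomes empty). End phase: symmetric, with the roles of start- and endpoints interchanged (endpoints are accumulated; $k$ accumulated endpoints yield one constraint and clear the list; encountering a startpoint of an interval $I_{j+1}$ after $j<k$ accumulated endpoints yields the two analogous constraints with fresh virtual elements and the list is replaced by virtual endpoints of $y_1,\dots,y_{j-1}$). *)

theory Defs
  imports Complex_Main "HOL-Library.Product_Lexorder"
begin

text \<open>A closed interval [a,b] is represented by the pair (a,b) with a \<le> b.
  Elements of the ground set X are either actual intervals (Inl) or
  virtual elements (Inr n), virtual elements being numbered by fresh naturals.\<close>

type_synonym ivl = "real \<times> real"
type_synonym elem = "ivl + nat"

definition endpoint :: "ivl \<times> bool \<Rightarrow> real" where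
  "endpoint p = (if snd p then fst (fst p) else snd (fst p))"

text \<open>Events: (position, is_startpoint, interval), scanned in increasing order.\<close>
definition events :: "ivl set \<Rightarrow> (bool \<times> ivl) list" where
  "events I = map (\<lambda>(p, t, J). (t, J))
     (sorted_list_of_set ((\<lambda>J. (fst J, True, J)) ` I \<union> (\<lambda>J. (snd J, False, J)) ` I))"

text \<open>State: (phase (True = start phase), active list, next fresh virtual index,
  constraints so far).  One scan step.\<close>
fun step :: "nat \<Rightarrow> bool \<times> elem list \<times> nat \<times> elem list list \<Rightarrow> bool \<times> ivl
               \<Rightarrow> bool \<times> elem list \<times> nat \<times> elem list list" where
  "step k (ph, act, n, S) (t, J) =
    (let ph' = (if act = [] then t else ph) in
     if t = ph' then
       (let act' = act @ [Inl J] in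
        if length act' = k then (ph', [], n, S @ [act']) else (ph', act', n, S))
     else
       (let j = length act;
            xs = map Inr [n..<n + (k - j)];
            ys = map Inr [n + (k - j)..<n + (k - j) + (j - 1)] in
        (ph', ys, n + (k - j) + (j - 1), S @ [act @ xs, ys @ [Inl J] @ xs])))"

definition construction :: "nat \<Rightarrow> ivl set \<Rightarrow> bool \<times> elem list \<times> nat \<times> elem list list" where
  "construction k I = foldl (step k) (True, [], 0, []) (events I)"

definition constr_X :: "nat \<Rightarrow> ivl set \<Rightarrow> elem set" where
  "constr_X k I = Inl ` I \<union> Inr ` {0..<fst (snd (snd (construction k I)))}"

definition constr_S :: "nat \<Rightarrow> ivl set \<Rightarrow> elem list set" where
  "constr_S k I = set (snd (snd (snd (construction k I))))"

definition color_count :: "ivl set \<Rightarrow> (ivl \<Rightarrow> nat) \<Rightarrow> nat \<Rightarrow> real \<Rightarrow> nat" where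
  "color_count I \<chi> i x = card {J \<in> I. \<chi> J = i \<and> fst J \<le> x \<and> x \<le> snd J}"

definition balanced_coloring :: "ivl set \<Rightarrow> nat \<Rightarrow> (ivl \<Rightarrow> nat) \<Rightarrow> bool" where
  "balanced_coloring I k \<chi> \<longleftrightarrow>
     (\<forall>J\<in>I. \<chi> J \<in> {1..k}) \<and>
     (\<forall>x::real. \<forall>i\<in>{1..k}. \<forall>j\<in>{1..k}.
        \<bar>int (color_count I \<chi> i x) - int (color_count I \<chi> j x)\<bar> \<le> 1)"

end

theory Submission imports Defs begin

definition inv :: "nat \<Rightarrow> (bool\<times>ivl) list \<Rightarrow> bool \<times> elem list \<times> nat \<times> elem list list \<Rightarrow> bool" where
"inv k pre st = (case st of (ph, act, n, S) \<Rightarrow>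
   length act < k \<and> distinct act \<and>
   (\<forall>J. Inl J \<in> set act \<longrightarrow> (ph, J) \<in> set pre) \<and>
   (\<forall>q. Inr q \<in> set act \<longrightarrow> q < n) \<and>
   (\<forall>C\<in>set S. distinct C \<and> length C = k \<and> (\<forall>q. Inr q \<in> set C \<longrightarrow> q < n) \<and>
        (\<forall>J. Inl J \<in> set C \<longrightarrow> J \<in> snd ` set pre)))"

lemma step_same:
  assumes "t = (if act = [] then t else ph)"
  shows "step k (ph, act, n, S) (t,J) = (if length (act @ [Inl J]) = k then (t, [], n, S @ [act @ [Inl J]]) else (t, act @ [Inl J], n, S))"
  using assms by (simp add: Let_def)

lemma step_diff:
  assumes "t \<noteq> (if act = [] then t else ph)"
  shows "step k (ph, act, n, S) (t,J) = (ph, map Inr [n + (k - length act)..<n + (k - length act) + (length act - 1)],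
     n + (k - length act) + (length act - 1),
     S @ [act @ map Inr [n..<n + (k - length act)], map Inr [n + (k - length act)..<n + (k - length act) + (length act - 1)] @ [Inl J] @ map Inr [n..<n + (k - length act)]])"
  using assms by (simp add: Let_def split: if_splits)

lemma inv_step:
  assumes I: "inv k pre (ph, act, n, S)" and D: "distinct (pre @ [(t,J)])" and k: "k \<ge> 1"
  shows "inv k (pre @ [(t,J)]) (step k (ph, act, n, S) (t,J))"
proof -
  have L: "length act < k" and Da: "distinct act" and A1: "\<forall>J. Inl J \<in> set act \<longrightarrow> (ph, J) \<in> set pre"
   and A2: "\<forall>q. Inr q \<in> set act \<longrightarrow> q < n"
   and SC: "\<forall>C\<in>set S. distinct C \<and> length C = k \<and> (\<forall>q. Inr q \<in> set C \<longrightarrow> q < n) \<and>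
        (\<forall>J. Inl J \<in> set C \<longrightarrow> J \<in> snd ` set pre)"
    using I unfolding inv_def by simp_all
  have Jn: "(t,J) \<notin> set pre" using D by simp
  show ?thesis
  proof (cases "t = (if act = [] then t else ph)")
    case True
    have nin: "Inl J \<notin> set act"
    proof
      assume "Inl J \<in> set act"
      hence "act \<noteq> []" "(ph,J) \<in> set pre" using A1 by (auto simp del: split_paired_All)
      thus False using True Jn by simp
    qed
    have A1': "\<forall>J'. Inl J' \<in> set (act @ [Inl J]) \<longrightarrow> (t, J') \<in> set (pre @ [(t,J)])"
    proof (intro allI impI)
      fix J' assume "Inl J' \<in> set (act @ [Inl J])"
      then consider "Inl J' \<in> set act" | "J' = J" by auto
      thus "(t, J') \<in> set (pre @ [(t,J)])"
      proof cases
        case 1 hence "act \<noteq> []" "(ph,J') \<in> set pre" using A1 by (auto simp del: split_paired_All)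
        thus ?thesis using True by simp
      qed simp
    qed
    have SC': "\<forall>C\<in>set S. distinct C \<and> length C = k \<and> (\<forall>q. Inr q \<in> set C \<longrightarrow> q < n) \<and>
        (\<forall>J'. Inl J' \<in> set C \<longrightarrow> J' \<in> snd ` set (pre @ [(t,J)]))"
      using SC by auto
    have C': "distinct (act @ [Inl J]) \<and> (\<forall>q. Inr q \<in> set (act @ [Inl J]) \<longrightarrow> q < n) \<and>
        (\<forall>J'. Inl J' \<in> set (act @ [Inl J]) \<longrightarrow> J' \<in> snd ` set (pre @ [(t,J)]))"
    proof (intro conjI)
      show "distinct (act @ [Inl J])" using Da nin by simp
      show "\<forall>q. Inr q \<in> set (act @ [Inl J]) \<longrightarrow> q < n" using A2 by simp
      show "\<forall>J'. Inl J' \<in> set (act @ [Inl J]) \<longrightarrow> J' \<in> snd ` set (pre @ [(t,J)])"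
        using A1' by force
    qed
    show ?thesis
    proof (cases "length (act @ [Inl J]) = k")
      case True
      show ?thesis unfolding step_same[OF \<open>t = _\<close>] using True SC' C' k
        unfolding inv_def by simp
    next
      case False
      show ?thesis unfolding step_same[OF \<open>t = _\<close>] using False SC' C' A1' L
        unfolding inv_def by simp
    qed
  next
    case False
    hence ne: "act \<noteq> []" and ph: "t \<noteq> ph" by (auto split: if_splits)
    define j where "j = length act"
    have j: "1 \<le> j" "j < k" using ne L unfolding j_def by (auto simp: Suc_le_eq)
    define xs :: "elem list" where "xs = map Inr [n..<n + (k - j)]"
    define ys :: "elem list" where "ys = map Inr [n + (k - j)..<n + (k - j) + (j - 1)]"
    define n' where "n' = n + (k - j) + (j - 1)"
    have st: "step k (ph, act, n, S) (t,J) = (ph, ys, n', S @ [act @ xs, ys @ [Inl J] @ xs])"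
      unfolding step_diff[OF False] xs_def ys_def n'_def j_def ..
    have dxs: "distinct xs" "distinct ys" unfolding xs_def ys_def by (simp_all add: distinct_map)
    have sxs: "set xs = Inr ` {n..<n + (k - j)}" "set ys = Inr ` {n + (k - j)..<n'}"
      unfolding xs_def ys_def n'_def by auto
    have lx: "length xs = k - j" "length ys = j - 1" unfolding xs_def ys_def by simp_all
    have nn: "n \<le> n'" unfolding n'_def by simp
    have d1: "distinct (act @ xs)" using Da dxs A2 sxs by fastforce
    have d2: "distinct (ys @ [Inl J] @ xs)" using dxs sxs by (auto simp: n'_def)
    have l1: "length (act @ xs) = k" "length (ys @ [Inl J] @ xs) = k" using j lx j_def by auto
    have r1: "\<forall>q. Inr q \<in> set (act @ xs) \<longrightarrow> q < n'" using A2 sxs nn j by (auto simp: n'_def)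
    have r2: "\<forall>q. Inr q \<in> set (ys @ [Inl J] @ xs) \<longrightarrow> q < n'" using sxs j by (auto simp: n'_def)
    have i1: "\<forall>J'. Inl J' \<in> set (act @ xs) \<longrightarrow> J' \<in> snd ` set (pre @ [(t,J)])"
      using A1 sxs by force
    have i2: "\<forall>J'. Inl J' \<in> set (ys @ [Inl J] @ xs) \<longrightarrow> J' \<in> snd ` set (pre @ [(t,J)])"
      using sxs by auto
    have SC': "\<forall>C\<in>set S. distinct C \<and> length C = k \<and> (\<forall>q. Inr q \<in> set C \<longrightarrow> q < n') \<and>
        (\<forall>J'. Inl J' \<in> set C \<longrightarrow> J' \<in> snd ` set (pre @ [(t,J)]))"
      using SC nn by fastforce
    have ys1: "length ys < k" "\<forall>J'. Inl J' \<notin> set ys" "\<forall>q. Inr q \<in> set ys \<longrightarrow> q < n'"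
      using lx j sxs by auto
    have all2: "\<And>P a b. \<forall>C\<in>set S. P C \<Longrightarrow> P a \<Longrightarrow> P b \<Longrightarrow> \<forall>C\<in>set (S @ [a,b]). P C" by auto
    have c5: "\<forall>C\<in>set (S @ [act @ xs, ys @ [Inl J] @ xs]). distinct C \<and> length C = k \<and> (\<forall>q. Inr q \<in> set C \<longrightarrow> q < n') \<and>
        (\<forall>J'. Inl J' \<in> set C \<longrightarrow> J' \<in> snd ` set (pre @ [(t,J)]))"
      apply (rule all2[OF SC'])
      using d1 l1 r1 i1 apply blast
      using d2 l1 r2 i2 apply blast
      done
    show ?thesis unfolding st inv_def prod.case using ys1 dxs(2) c5 by blast
  qed
qed

definition ccnt :: "(elem \<Rightarrow> nat) \<Rightarrow> (bool \<times> ivl) list \<Rightarrow> nat \<Rightarrow> int" where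
 "ccnt \<chi> es i = (\<Sum>e\<leftarrow>es. if \<chi> (Inl (snd e)) = i then (if fst e then 1 else -1) else 0)"

definition acnt :: "(elem \<Rightarrow> nat) \<Rightarrow> elem list \<Rightarrow> nat \<Rightarrow> int" where
 "acnt \<chi> A i = int (length (filter (\<lambda>a. \<chi> a = i) A))"

definition good :: "(elem \<Rightarrow> nat) \<Rightarrow> nat \<Rightarrow> elem list \<Rightarrow> bool" where
 "good \<chi> k C = (length C = k \<and> distinct C \<and> (\<forall>a\<in>set C. \<chi> a \<in> {1..k}) \<and>
     (\<forall>a\<in>set C. \<forall>b\<in>set C. a \<noteq> b \<longrightarrow> \<chi> a \<noteq> \<chi> b))"

definition cinv :: "(elem \<Rightarrow> nat) \<Rightarrow> nat \<Rightarrow> (bool\<times>ivl) list \<Rightarrow> bool \<times> elem list \<times> nat \<times> elem list list \<Rightarrow> bool" where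
 "cinv \<chi> k pre st = (case st of (ph, act, n, S) \<Rightarrow>
    (\<exists>m::int. \<forall>i\<in>{1..k}. ccnt \<chi> pre i = m + (if ph then acnt \<chi> act i else - acnt \<chi> act i)))"

lemma acnt_append[simp]: "acnt \<chi> (A @ B) i = acnt \<chi> A i + acnt \<chi> B i"
  unfolding acnt_def by simp

lemma acnt_Nil[simp]: "acnt \<chi> [] i = 0" unfolding acnt_def by simp

lemma acnt_Cons[simp]: "acnt \<chi> (a # A) i = (if \<chi> a = i then 1 else 0) + acnt \<chi> A i" unfolding acnt_def by simp

lemma acnt_single: "acnt \<chi> [a] i = (if \<chi> a = i then 1 else 0)" unfolding acnt_def by simp

lemma ccnt_snoc[simp]: "ccnt \<chi> (pre @ [(t,J)]) i = ccnt \<chi> pre i + (if \<chi> (Inl J) = i then (if t then 1 else -1) else 0)"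
  unfolding ccnt_def by simp

lemma good_acnt:
  assumes "good \<chi> k C" "i \<in> {1..k}"
  shows "acnt \<chi> C i = 1"
proof -
  have L: "length C = k" and D: "distinct C" and R: "\<forall>a\<in>set C. \<chi> a \<in> {1..k}"
    and P: "\<forall>a\<in>set C. \<forall>b\<in>set C. a \<noteq> b \<longrightarrow> \<chi> a \<noteq> \<chi> b" using assms(1) unfolding good_def by auto
  have inj: "inj_on \<chi> (set C)" using P unfolding inj_on_def by blast
  have "card (\<chi> ` set C) = k" using card_image[OF inj] distinct_card[OF D] L by simp
  moreover have "\<chi> ` set C \<subseteq> {1..k}" using R by auto
  ultimately have img: "\<chi> ` set C = {1..k}" by (simp add: card_subset_eq)
  then obtain a where a: "a \<in> set C" "\<chi> a = i" using assms(2) by (metis imageE)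
  have "{x. \<chi> x = i} \<inter> set C = {a}" using a inj unfolding inj_on_def by blast
  thus ?thesis unfolding acnt_def using distinct_length_filter[OF D, of "\<lambda>x. \<chi> x = i"] by simp
qed

lemma cinv_step:
  assumes C: "cinv \<chi> k pre (ph, act, n, S)" and I: "inv k pre (ph, act, n, S)"
    and G: "\<forall>C\<in>set (snd (snd (snd (step k (ph, act, n, S) (t,J))))). good \<chi> k C" and k: "k \<ge> 1"
  shows "cinv \<chi> k (pre @ [(t,J)]) (step k (ph, act, n, S) (t,J))"
proof -
  obtain m where m: "\<forall>i\<in>{1..k}. ccnt \<chi> pre i = m + (if ph then acnt \<chi> act i else - acnt \<chi> act i)"
    using C unfolding cinv_def by auto
  have L: "length act < k" using I unfolding inv_def by simp
  show ?thesis
  proof (cases "t = (if act = [] then t else ph)")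
    case True
    have m': "\<forall>i\<in>{1..k}. ccnt \<chi> pre i = m + (if t then acnt \<chi> act i else - acnt \<chi> act i)"
      using m True by (cases "act = []") auto
    show ?thesis
    proof (cases "length (act @ [Inl J]) = k")
      case True
      have g: "good \<chi> k (act @ [Inl J])" using G True unfolding step_same[OF \<open>t = _\<close>] by simp
      have "\<forall>i\<in>{1..k}. ccnt \<chi> (pre @ [(t,J)]) i = (m + (if t then 1 else -1)) + (if t then acnt \<chi> [] i else - acnt \<chi> [] i)"
      proof
        fix i assume i: "i \<in> {1..k}"
        have "acnt \<chi> act i + (if \<chi> (Inl J) = i then 1 else 0) = 1" using good_acnt[OF g i] by simp
        thus "ccnt \<chi> (pre @ [(t,J)]) i = (m + (if t then 1 else -1)) + (if t then acnt \<chi> [] i else - acnt \<chi> [] i)"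
          using m' i by (cases t) auto
      qed
      thus ?thesis unfolding step_same[OF \<open>t = _\<close>] cinv_def using True by auto
    next
      case False
      have "\<forall>i\<in>{1..k}. ccnt \<chi> (pre @ [(t,J)]) i = m + (if t then acnt \<chi> (act @ [Inl J]) i else - acnt \<chi> (act @ [Inl J]) i)"
        using m' by auto
      thus ?thesis unfolding step_same[OF \<open>t = _\<close>] cinv_def using False by auto
    qed
  next
    case False
    hence ne: "act \<noteq> []" and ph: "t \<noteq> ph" by (auto split: if_splits)
    define j where "j = length act"
    define xs :: "elem list" where "xs = map Inr [n..<n + (k - j)]"
    define ys :: "elem list" where "ys = map Inr [n + (k - j)..<n + (k - j) + (j - 1)]"
    define n' where "n' = n + (k - j) + (j - 1)"
    have st: "step k (ph, act, n, S) (t,J) = (ph, ys, n', S @ [act @ xs, ys @ [Inl J] @ xs])"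
      unfolding step_diff[OF False] xs_def ys_def n'_def j_def ..
    have g1: "good \<chi> k (act @ xs)" and g2: "good \<chi> k (ys @ [Inl J] @ xs)" using G unfolding st by auto
    have "\<forall>i\<in>{1..k}. ccnt \<chi> (pre @ [(t,J)]) i = m + (if ph then acnt \<chi> ys i else - acnt \<chi> ys i)"
    proof
      fix i assume i: "i \<in> {1..k}"
      have e1: "acnt \<chi> act i + acnt \<chi> xs i = 1" using good_acnt[OF g1 i] by simp
      have e2: "acnt \<chi> ys i + (if \<chi> (Inl J) = i then 1 else 0) + acnt \<chi> xs i = 1" using good_acnt[OF g2 i] by simp
      show "ccnt \<chi> (pre @ [(t,J)]) i = m + (if ph then acnt \<chi> ys i else - acnt \<chi> ys i)"
        using m i e1 e2 ph by (cases t) auto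
    qed
    thus ?thesis unfolding st cinv_def by auto
  qed
qed


definition run :: "nat \<Rightarrow> (bool \<times> ivl) list \<Rightarrow> bool \<times> elem list \<times> nat \<times> elem list list" where
  "run k es = foldl (step k) (True, [], 0, []) es"

lemma run_snoc: "run k (pre @ [e]) = step k (run k pre) e"
  unfolding run_def by simp

lemma step_facts:
  fixes st :: "bool \<times> elem list \<times> nat \<times> elem list list"
  shows "set (snd (snd (snd st))) \<subseteq> set (snd (snd (snd (step k st e)))) \<and>
     fst (snd (snd st)) \<le> fst (snd (snd (step k st e))) \<and>
     (fst (snd st) = [] \<or> (\<exists>c. fst (snd (step k st e)) = fst (snd st) @ c) \<or>
      (\<exists>C\<in>set (snd (snd (snd (step k st e)))). \<exists>c. C = fst (snd st) @ c))"
proof -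
  obtain ph act n S where st: "st = (ph, act, n, S)" by (cases st) auto
  obtain t J where e: "e = (t, J)" by (cases e) auto
  show ?thesis
  proof (cases "t = (if act = [] then t else ph)")
    case True
    show ?thesis unfolding st e step_same[OF True] by auto
  next
    case False
    show ?thesis unfolding st e step_diff[OF False] by auto
  qed
qed

lemma fold_facts:
  "set (snd (snd (snd st))) \<subseteq> set (snd (snd (snd (foldl (step k) st post)))) \<and>
     fst (snd (snd st)) \<le> fst (snd (snd (foldl (step k) st post))) \<and>
     (fst (snd st) = [] \<or> (\<exists>c. fst (snd (foldl (step k) st post)) = fst (snd st) @ c) \<or>
      (\<exists>C\<in>set (snd (snd (snd (foldl (step k) st post)))). \<exists>c. C = fst (snd st) @ c))"
proof (induction post arbitrary: st)
  case Nil
  then show ?case by auto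
next
  case (Cons e post)
  have s: "foldl (step k) st (e # post) = foldl (step k) (step k st e) post" by simp
  note A = step_facts[of st k e]
  note B = Cons.IH[of "step k st e"]
  show ?case unfolding s
  proof (intro conjI)
    show "set (snd (snd (snd st))) \<subseteq> set (snd (snd (snd (foldl (step k) (step k st e) post))))"
      using A B by blast
    show "fst (snd (snd st)) \<le> fst (snd (snd (foldl (step k) (step k st e) post)))"
      using A B by linarith
    show "fst (snd st) = [] \<or> (\<exists>c. fst (snd (foldl (step k) (step k st e) post)) = fst (snd st) @ c) \<or>
      (\<exists>C\<in>set (snd (snd (snd (foldl (step k) (step k st e) post)))). \<exists>c. C = fst (snd st) @ c)"
    proof -
      { assume ne: "fst (snd st) \<noteq> []"
        have ?thesis
        proof (cases "\<exists>c. fst (snd (step k st e)) = fst (snd st) @ c")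
          case True
          then obtain c where c: "fst (snd (step k st e)) = fst (snd st) @ c" by blast
          have "fst (snd (step k st e)) \<noteq> []" using ne c by simp
          then consider "\<exists>c. fst (snd (foldl (step k) (step k st e) post)) = fst (snd (step k st e)) @ c"
            | "\<exists>C\<in>set (snd (snd (snd (foldl (step k) (step k st e) post)))). \<exists>c. C = fst (snd (step k st e)) @ c"
            using B by blast
          thus ?thesis using c by cases auto
        next
          case False
          then obtain C where "C\<in>set (snd (snd (snd (step k st e))))" "\<exists>c. C = fst (snd st) @ c"
            using A ne by blast
          thus ?thesis using B by blast
        qed }
      thus ?thesis by blast
    qed
  qed
qed

lemma inv_run: "k \<ge> 1 \<Longrightarrow> distinct pre \<Longrightarrow> inv k pre (run k pre)"
proof (induction pre rule: rev_induct)
  case Nil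
  then show ?case unfolding run_def inv_def by simp
next
  case (snoc e pre)
  obtain ph act n S where st: "run k pre = (ph, act, n, S)" by (cases "run k pre") auto
  obtain t J where e: "e = (t, J)" by (cases e) auto
  have "inv k pre (ph, act, n, S)" using snoc st by simp
  from inv_step[OF this] snoc.prems show ?case unfolding run_snoc st e by simp
qed

lemma cinv_run: "k \<ge> 1 \<Longrightarrow> distinct pre \<Longrightarrow> \<forall>C\<in>set (snd (snd (snd (run k pre)))). good \<chi> k C
   \<Longrightarrow> cinv \<chi> k pre (run k pre)"
proof (induction pre rule: rev_induct)
  case Nil
  then show ?case unfolding run_def cinv_def ccnt_def by simp
next
  case (snoc e pre)
  obtain ph act n S where st: "run k pre = (ph, act, n, S)" by (cases "run k pre") auto
  obtain t J where e: "e = (t, J)" by (cases e) auto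
  have G: "\<forall>C\<in>set (snd (snd (snd (step k (ph, act, n, S) (t,J))))). good \<chi> k C"
    using snoc.prems(3) unfolding run_snoc st e .
  have "set (snd (snd (snd (run k pre)))) \<subseteq> set (snd (snd (snd (run k (pre @ [e])))))"
    using step_facts[of "run k pre" k e] unfolding run_snoc by blast
  hence "cinv \<chi> k pre (ph, act, n, S)" using snoc st by auto
  moreover have "inv k pre (ph, act, n, S)" using inv_run[of k pre] snoc.prems st by simp
  ultimately show ?case using cinv_step G snoc.prems(1) unfolding run_snoc st e by blast
qed


lemma acnt_le1:
  assumes "distinct A" "\<forall>a\<in>set A. \<forall>b\<in>set A. a \<noteq> b \<longrightarrow> \<chi> a \<noteq> \<chi> b"
  shows "acnt \<chi> A i \<le> 1" "acnt \<chi> A i \<ge> 0"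
proof -
  have "{x. \<chi> x = i} \<inter> set A = {} \<or> (\<exists>a. {x. \<chi> x = i} \<inter> set A = {a})"
    using assms(2) by blast
  hence "card ({x. \<chi> x = i} \<inter> set A) \<le> 1" by auto
  thus "acnt \<chi> A i \<le> 1" unfolding acnt_def using distinct_length_filter[OF assms(1)] by simp
  show "acnt \<chi> A i \<ge> 0" unfolding acnt_def by simp
qed

lemma final_act_empty:
  assumes k: "k \<ge> 1" and D: "distinct E"
    and G: "\<forall>C\<in>set (snd (snd (snd (run k E)))). good \<chi> k C"
    and Z: "\<forall>i\<in>{1..k}. ccnt \<chi> E i = 0"
    and Col: "\<forall>J\<in>snd ` set E. \<chi> (Inl J) \<in> {1..k}"
    and ColR: "\<forall>q < fst (snd (snd (run k E))). \<chi> (Inr q) \<in> {1..k}"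
  shows "fst (snd (run k E)) = []"
proof -
  obtain ph act n S where st: "run k E = (ph, act, n, S)" by (cases "run k E") auto
  have I: "inv k E (ph, act, n, S)" using inv_run[OF k D] st by simp
  have Cv: "cinv \<chi> k E (ph, act, n, S)" using cinv_run[OF k D G] st by simp
  then obtain m where m: "\<forall>i\<in>{1..k}. ccnt \<chi> E i = m + (if ph then acnt \<chi> act i else - acnt \<chi> act i)"
    unfolding cinv_def by auto
  have L: "length act < k" using I unfolding inv_def by simp
  have colA: "\<forall>a\<in>set act. \<chi> a \<in> {1..k}"
  proof
    fix a assume a: "a \<in> set act"
    show "\<chi> a \<in> {1..k}"
    proof (cases a)
      case (Inl J)
      have "\<forall>J. Inl J \<in> set act \<longrightarrow> (ph, J) \<in> set E" using I unfolding inv_def by blast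
      hence "(ph, J) \<in> set E" using Inl a by blast
      thus ?thesis using Col Inl by force
    next
      case (Inr q)
      hence "q < n" using I a unfolding inv_def by simp
      thus ?thesis using ColR Inr st by simp
    qed
  qed
  show ?thesis
  proof (rule ccontr)
    assume ne: "fst (snd (run k E)) \<noteq> []"
    hence ne': "act \<noteq> []" using st by simp
    have "card (\<chi> ` set act) \<le> length act" using card_image_le card_length le_trans by blast
    hence "card (\<chi> ` set act) < card {1..k}" using L by simp
    hence "\<not> {1..k} \<subseteq> \<chi> ` set act" using card_mono[of "\<chi> ` set act" "{1..k}"] by auto
    then obtain i0 where i0: "i0 \<in> {1..k}" "i0 \<notin> \<chi> ` set act" by blast
    have "acnt \<chi> act i0 = 0" unfolding acnt_def using i0(2) by (auto simp: filter_empty_conv)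
    hence m0: "m = 0" using m[rule_format, OF i0(1)] Z[rule_format, OF i0(1)] by (smt (verit))
    obtain a where a: "a \<in> set act" using ne' by (cases act) auto
    have "acnt \<chi> act (\<chi> a) \<noteq> 0" unfolding acnt_def using a by (auto simp: filter_empty_conv)
    thus False using m Z colA a m0 by (cases ph) auto
  qed
qed

lemma prefix_balanced:
  assumes k: "k \<ge> 1" and D: "distinct E"
    and G: "\<forall>C\<in>set (snd (snd (snd (run k E)))). good \<chi> k C"
    and Z: "\<forall>i\<in>{1..k}. ccnt \<chi> E i = 0"
    and Col: "\<forall>J\<in>snd ` set E. \<chi> (Inl J) \<in> {1..k}"
    and ColR: "\<forall>q < fst (snd (snd (run k E))). \<chi> (Inr q) \<in> {1..k}"
    and i: "i \<in> {1..k}" and j: "j \<in> {1..k}"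
  shows "\<bar>ccnt \<chi> (take N E) i - ccnt \<chi> (take N E) j\<bar> \<le> 1"
proof -
  define pre where "pre = take N E"
  have Dp: "distinct pre" unfolding pre_def using D by simp
  have fE: "run k E = foldl (step k) (run k pre) (drop N E)"
    unfolding run_def pre_def by (metis append_take_drop_id foldl_append)
  note F = fold_facts[of "run k pre" k "drop N E", folded fE]
  have fin: "fst (snd (run k E)) = []" using final_act_empty[OF k D G Z Col ColR] .
  have Gp: "\<forall>C\<in>set (snd (snd (snd (run k pre)))). good \<chi> k C" using F G by blast
  obtain ph act n S where st: "run k pre = (ph, act, n, S)" by (cases "run k pre") auto
  have I: "inv k pre (ph, act, n, S)" using inv_run[OF k Dp] st by simp
  have Da: "distinct act" using I unfolding inv_def by simp
  have Cv: "cinv \<chi> k pre (ph, act, n, S)" using cinv_run[OF k Dp Gp] st by simp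
  then obtain m where m: "\<forall>i\<in>{1..k}. ccnt \<chi> pre i = m + (if ph then acnt \<chi> act i else - acnt \<chi> act i)"
    unfolding cinv_def by auto
  have P: "\<forall>a\<in>set act. \<forall>b\<in>set act. a \<noteq> b \<longrightarrow> \<chi> a \<noteq> \<chi> b"
  proof (cases "act = []")
    case False
    hence "\<exists>C\<in>set (snd (snd (snd (run k E)))). \<exists>c. C = act @ c" using F fin st by auto
    then obtain C c where "C \<in> set (snd (snd (snd (run k E))))" "C = act @ c" by blast
    hence "good \<chi> k (act @ c)" using G by simp
    thus ?thesis unfolding good_def by auto
  qed simp
  have b: "acnt \<chi> act i \<le> 1" "acnt \<chi> act i \<ge> 0" "acnt \<chi> act j \<le> 1" "acnt \<chi> act j \<ge> 0"
    using acnt_le1[OF Da P] by auto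
  show ?thesis using m i j b unfolding pre_def[symmetric] by (cases ph) auto
qed


lemma sorted_filter_take:
  fixes L :: "('a::linorder \<times> 'b::linorder) list"
  assumes "sorted L" "\<forall>a b. Q b \<and> a \<le> b \<longrightarrow> Q a"
  shows "filter (\<lambda>e. Q (fst e)) L = take (length (filter (\<lambda>e. Q (fst e)) L)) L"
  using assms(1)
proof (induction L)
  case Nil
  then show ?case by simp
next
  case (Cons a L)
  show ?case
  proof (cases "Q (fst a)")
    case True
    thus ?thesis using Cons by simp
  next
    case False
    have "\<forall>b\<in>set L. a \<le> b" using Cons.prems by simp
    hence "\<forall>b\<in>set L. fst a \<le> fst b" by (auto simp: less_eq_prod_def)
    hence "\<forall>b\<in>set L. \<not> Q (fst b)" using False assms(2) by blast
    hence "filter (\<lambda>e. Q (fst e)) L = []" by (simp add: filter_empty_conv)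
    thus ?thesis using False by simp
  qed
qed

lemma events_facts:
  assumes fin: "finite I"
  shows "distinct (events I)" "set (events I) = (\<lambda>J. (True,J)) ` I \<union> (\<lambda>J. (False,J)) ` I"
    and "\<And>Q. \<forall>a b. Q b \<and> a \<le> b \<longrightarrow> Q a \<Longrightarrow> \<exists>N. set (take N (events I)) =
          (\<lambda>J. (True,J)) ` {J\<in>I. Q (fst J)} \<union> (\<lambda>J. (False,J)) ` {J\<in>I. Q (snd J)}"
proof -
  define T where "T = (\<lambda>J. (fst J, True, J)) ` I \<union> (\<lambda>J. (snd J, False, J)) ` I"
  define g :: "real \<times> bool \<times> ivl \<Rightarrow> bool \<times> ivl" where "g = (\<lambda>(p, t, J). (t, J))"
  define L where "L = sorted_list_of_set T"
  have E: "events I = map g L" unfolding events_def g_def L_def T_def ..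
  have fT: "finite T" unfolding T_def using fin by simp
  have sL: "set L = T" "sorted L" "distinct L" unfolding L_def using fT by auto
  have inj: "inj_on g T" unfolding inj_on_def T_def g_def by auto
  show "distinct (events I)" unfolding E using inj sL by (simp add: distinct_map)
  show "set (events I) = (\<lambda>J. (True,J)) ` I \<union> (\<lambda>J. (False,J)) ` I"
    unfolding E set_map sL(1) unfolding T_def g_def by (simp add: image_Un image_image)
  fix Q :: "real \<Rightarrow> bool" assume Q: "\<forall>a b. Q b \<and> a \<le> b \<longrightarrow> Q a"
  define N where "N = length (filter (\<lambda>e. Q (fst e)) L)"
  have "take N (events I) = map g (filter (\<lambda>e. Q (fst e)) L)"
    unfolding E take_map N_def using sorted_filter_take[OF sL(2) Q] by simp
  hence "set (take N (events I)) = g ` {e\<in>T. Q (fst e)}" using sL by auto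
  also have "\<dots> = (\<lambda>J. (True,J)) ` {J\<in>I. Q (fst J)} \<union> (\<lambda>J. (False,J)) ` {J\<in>I. Q (snd J)}"
  proof -
    have "{e\<in>T. Q (fst e)} = (\<lambda>J. (fst J, True, J)) ` {J\<in>I. Q (fst J)} \<union> (\<lambda>J. (snd J, False, J)) ` {J\<in>I. Q (snd J)}"
      unfolding T_def by auto
    thus ?thesis unfolding g_def by (simp add: image_Un image_image)
  qed
  finally show "\<exists>N. set (take N (events I)) =
          (\<lambda>J. (True,J)) ` {J\<in>I. Q (fst J)} \<union> (\<lambda>J. (False,J)) ` {J\<in>I. Q (snd J)}" by blast
qed

lemma ccnt_set:
  assumes "distinct es" "set es = (\<lambda>J. (True,J)) ` A \<union> (\<lambda>J. (False,J)) ` B" "finite A" "finite B"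
  shows "ccnt \<chi> es i = int (card {J\<in>A. \<chi> (Inl J) = i}) - int (card {J\<in>B. \<chi> (Inl J) = i})"
proof -
  let ?f = "\<lambda>e::bool \<times> ivl. if \<chi> (Inl (snd e)) = i then (if fst e then 1 else -1) else (0::int)"
  have "ccnt \<chi> es i = sum ?f (set es)"
    unfolding ccnt_def using sum_list_distinct_conv_sum_set[OF assms(1), of ?f] by simp
  also have "\<dots> = sum ?f ((\<lambda>J. (True,J)) ` A) + sum ?f ((\<lambda>J. (False,J)) ` B)"
    unfolding assms(2) by (rule sum.union_disjoint) (use assms in auto)
  also have "sum ?f ((\<lambda>J. (True,J)) ` A) = (\<Sum>J\<in>A. if \<chi> (Inl J) = i then 1 else 0)"
    by (subst sum.reindex) (simp_all add: inj_on_def comp_def cong: if_cong)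
  also have "\<dots> = int (card {J\<in>A. \<chi> (Inl J) = i})"
    using assms(3) by (simp add: sum.If_cases Int_def)
  also have "sum ?f ((\<lambda>J. (False,J)) ` B) = (\<Sum>J\<in>B. if \<chi> (Inl J) = i then -1 else 0)"
    by (subst sum.reindex) (simp_all add: inj_on_def comp_def cong: if_cong)
  also have "\<dots> = - int (card {J\<in>B. \<chi> (Inl J) = i})"
    using assms(4) by (simp add: sum.If_cases Int_def)
  finally show ?thesis by simp
qed


lemma key_count:
  assumes fin: "finite I" and le: "\<forall>J\<in>I. fst J \<le> snd J"
    and Q: "\<forall>a b. Q b \<and> a \<le> b \<longrightarrow> Q a"
    and QX: "\<forall>J\<in>I. (Q (fst J) \<and> \<not> Q (snd J)) \<longleftrightarrow> (fst J \<le> x \<and> x \<le> snd J)"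
  shows "int (card {J\<in>{J\<in>I. Q (fst J)}. \<chi> (Inl J) = i}) - int (card {J\<in>{J\<in>I. Q (snd J)}. \<chi> (Inl J) = i})
     = int (color_count I (\<lambda>J. \<chi> (Inl J)) i x)"
proof -
  define A where "A = {J\<in>{J\<in>I. Q (fst J)}. \<chi> (Inl J) = i}"
  define B where "B = {J\<in>{J\<in>I. Q (snd J)}. \<chi> (Inl J) = i}"
  have BA: "B \<subseteq> A" unfolding A_def B_def using le Q by auto
  have fA: "finite A" unfolding A_def using fin by simp
  have "A - B = {J \<in> I. \<chi> (Inl J) = i \<and> fst J \<le> x \<and> x \<le> snd J}"
    unfolding A_def B_def using QX by auto
  moreover have "card (A - B) = card A - card B" using card_Diff_subset[OF finite_subset[OF BA fA] BA] .
  moreover have "card B \<le> card A" using card_mono[OF fA BA] .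
  ultimately show ?thesis unfolding color_count_def A_def[symmetric] B_def[symmetric] by simp
qed

theorem lemma3:
  fixes I :: "ivl set" and k :: nat and \<chi> :: "elem \<Rightarrow> nat"
  assumes "finite I"
    and "\<forall>J\<in>I. fst J \<le> snd J"
    and "inj_on endpoint (I \<times> UNIV)"
    and "k \<ge> 1"
    and "\<forall>x\<in>constr_X k I. \<chi> x \<in> {1..k}"
    and "\<forall>S\<in>constr_S k I. \<forall>a\<in>set S. \<forall>b\<in>set S. a \<noteq> b \<longrightarrow> \<chi> a \<noteq> \<chi> b"
  shows "balanced_coloring I k (\<lambda>J. \<chi> (Inl J))"
proof -
  note fin = assms(1) and le = assms(2) and injE = assms(3) and k = assms(4) and colX = assms(5) and pw = assms(6)
  define E where "E = events I"
  have cr: "construction k I = run k E" unfolding construction_def run_def E_def ..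
  have D: "distinct E" unfolding E_def using events_facts(1)[OF fin] .
  have SE: "set E = (\<lambda>J. (True,J)) ` I \<union> (\<lambda>J. (False,J)) ` I" unfolding E_def using events_facts(2)[OF fin] .
  have sndE: "snd ` set E = I" unfolding SE image_Un image_image by simp
  obtain ph act n S where st: "run k E = (ph, act, n, S)" by (cases "run k E") auto
  have Iv: "inv k E (ph, act, n, S)" using inv_run[OF k D] st by simp
  have Xd: "constr_X k I = Inl ` I \<union> Inr ` {0..<n}" unfolding constr_X_def cr st by simp
  have Sd: "constr_S k I = set S" unfolding constr_S_def cr st by simp
  have Col: "\<forall>J\<in>snd ` set E. \<chi> (Inl J) \<in> {1..k}" using colX unfolding sndE Xd by auto
  have ColR: "\<forall>q < fst (snd (snd (run k E))). \<chi> (Inr q) \<in> {1..k}" using colX unfolding st Xd by auto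
  have G: "\<forall>C\<in>set (snd (snd (snd (run k E)))). good \<chi> k C"
  proof
    fix C assume C: "C \<in> set (snd (snd (snd (run k E))))"
    hence C': "C \<in> set S" using st by simp
    have P: "distinct C \<and> length C = k \<and> (\<forall>q. Inr q \<in> set C \<longrightarrow> q < n) \<and> (\<forall>J. Inl J \<in> set C \<longrightarrow> J \<in> snd ` set E)"
      using Iv C' unfolding inv_def by simp
    have "set C \<subseteq> constr_X k I"
    proof
      fix a assume a: "a \<in> set C"
      show "a \<in> constr_X k I"
      proof (cases a)
        case (Inl J)
        have "\<forall>J. Inl J \<in> set C \<longrightarrow> J \<in> snd ` set E" using P by blast
        hence "J \<in> I" using Inl a sndE by blast
        thus ?thesis using Inl Xd by blast
      next
        case (Inr q) thus ?thesis using P a Xd by auto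
      qed
    qed
    thus "good \<chi> k C" unfolding good_def using P colX pw C' Sd by blast
  qed
  have Z: "\<forall>i\<in>{1..k}. ccnt \<chi> E i = 0" using ccnt_set[OF D SE fin fin] by simp
  show ?thesis unfolding balanced_coloring_def
  proof (intro conjI ballI allI)
    fix J assume "J \<in> I" thus "\<chi> (Inl J) \<in> {1..k}" using colX Xd by auto
  next
    fix x :: real and i j assume i: "i \<in> {1..k}" and j: "j \<in> {1..k}"
    obtain Q where Q: "\<forall>a b. Q b \<and> a \<le> b \<longrightarrow> Q a"
      and QX: "\<forall>J\<in>I. (Q (fst J) \<and> \<not> Q (snd J)) \<longleftrightarrow> (fst J \<le> x \<and> x \<le> snd J)"
    proof (cases "\<exists>J0\<in>I. fst J0 = x")
      case True
      then obtain J0 where J0: "J0 \<in> I" "fst J0 = x" by blast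
      have "\<forall>J\<in>I. snd J \<noteq> x"
      proof (intro ballI notI)
        fix J assume J: "J \<in> I" "snd J = x"
        have "endpoint (J, False) = endpoint (J0, True)" using J J0 unfolding endpoint_def by simp
        hence "(J, False) = (J0, True)" using injE J J0 unfolding inj_on_def by blast
        thus False by simp
      qed
      hence "\<forall>J\<in>I. (fst J \<le> x \<and> \<not> snd J \<le> x) \<longleftrightarrow> (fst J \<le> x \<and> x \<le> snd J)" by force
      moreover have "\<forall>a b. b \<le> x \<and> a \<le> b \<longrightarrow> a \<le> x" by auto
      ultimately show ?thesis using that[of "\<lambda>p. p \<le> x"] by blast
    next
      case False
      hence "\<forall>J\<in>I. (fst J < x \<and> \<not> snd J < x) \<longleftrightarrow> (fst J \<le> x \<and> x \<le> snd J)" by force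
      moreover have "\<forall>a b. b < x \<and> a \<le> b \<longrightarrow> a < x" by auto
      ultimately show ?thesis using that[of "\<lambda>p. p < x"] by blast
    qed
    obtain N where N: "set (take N E) = (\<lambda>J. (True,J)) ` {J\<in>I. Q (fst J)} \<union> (\<lambda>J. (False,J)) ` {J\<in>I. Q (snd J)}"
      using events_facts(3)[OF fin Q] unfolding E_def by blast
    have DN: "distinct (take N E)" using D by simp
    have cc: "\<And>i. ccnt \<chi> (take N E) i = int (color_count I (\<lambda>J. \<chi> (Inl J)) i x)"
      using ccnt_set[OF DN N] fin key_count[OF fin le Q QX] by simp
    show "\<bar>int (color_count I (\<lambda>J. \<chi> (Inl J)) i x) - int (color_count I (\<lambda>J. \<chi> (Inl J)) j x)\<bar> \<le> 1"
      using prefix_balanced[OF k D G Z Col ColR i j, of N] unfolding cc .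
  qed
qed

end
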